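(* Let $\alpha\in(0,1)$ and let $f_k$ ($k\in\mathbb N$) be as in an admissible system. Then $\lim_{n\to\infty}m\left(\left\|\mathbb W_n^{(\mathbf L)}(f)\right\|_\infty\ne0\right)=0$, where $\mathbb W_n^{(\mathbf L)}(f):=\sum_{k>\frac1\alpha\log n}\mathbb W_n(f_k)$.
   Context: $(\mathcal X,\mathcal B,m,T)$ is an ergodic, aperiodic probability preserving system; $\log$ is base $2$. $S_n(h):=\sum_{j=0}^{n-1}h\circ T^j$; $\mathbb W_n(h)(t):=n^{-1/\alpha}S_{\lfloor nt\rfloor}(h)$, $t\in[0,1]$; $\|\cdot\|_\infty$ is the supremum over $t\in[0,1]$. $S_\alpha(\sigma,\beta,\mu)$ denotes the stable law with characteristic function $\exp\{-\sigma^\alpha|\theta|^\alpha(1-i\beta\,\mathrm{sign}(\theta)\tan(\pi\alpha/2))+i\mu\theta\}$ ($\alpha\neq1$). Triangular array: on $(\Omega,\mathcal F,\mathbb P)$ let $\{X_k(m):k,m\in\mathbb N\}$ be independent with $X_k(m)\sim S_\alpha(k^{-1/\alpha},1,0)$; $Y_k(m):=X_k(m)\mathbf 1_{[2^k\le X_k(m)\le4^k]}$; $Z_k(m):=\sum_{j=8^k}^{16^k}\frac{j}{4^k}\mathbf 1_{[j/4^k\le Y_k(m)<(j+1)/4^k]}$. Let $d_k:=4^{k^2}$. An admissible system is a sequence of measurable $f_k:\mathcal X\to\mathbb R$ such that the family $\{f_k\circ T^j:k\in\mathbb N,0\le j<2d_k\}$ has under $m$ the same joint distribution as $\{Z_k(j+1):k\in\mathbb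 N,0\le j<2d_k\}$, together with $g_k:=f_k\circ T^{d_k}$. *)

theory Defs
  imports "HOL-Probability.Probability"
begin

definition measure_preserving_sys :: "'a measure \<Rightarrow> ('a \<Rightarrow> 'a) \<Rightarrow> bool" where
  "measure_preserving_sys M T \<longleftrightarrow> T \<in> measurable M M \<and> distr M M T = M"

definition ergodic_sys :: "'a measure \<Rightarrow> ('a \<Rightarrow> 'a) \<Rightarrow> bool" where
  "ergodic_sys M T \<longleftrightarrow> (\<forall>A \<in> sets M. T -` A \<inter> space M = A \<longrightarrow>
      measure M A = 0 \<or> measure M A = 1)"

definition aperiodic_sys :: "'a measure \<Rightarrow> ('a \<Rightarrow> 'a) \<Rightarrow> bool" where
  "aperiodic_sys M T \<longleftrightarrow> (AE x in M. \<forall>n::nat. n \<ge> 1 \<longrightarrow> (T ^^ n) x \<noteq> x)"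

text \<open>Stable law \<open>S_\<alpha>(\<sigma>,\<beta>,\<mu>)\<close> (for \<open>\<alpha> \<noteq> 1\<close>), via its characteristic function.\<close>

definition has_stable_law ::
  "'b measure \<Rightarrow> ('b \<Rightarrow> real) \<Rightarrow> real \<Rightarrow> real \<Rightarrow> real \<Rightarrow> real \<Rightarrow> bool" where
  "has_stable_law P X \<alpha> \<sigma> \<beta> \<mu> \<longleftrightarrow> X \<in> borel_measurable P \<and>
     (\<forall>\<theta>::real. char (distr P borel X) \<theta> =
        exp (- complex_of_real (\<sigma> powr \<alpha> * \<bar>\<theta>\<bar> powr \<alpha>)
               * (1 - \<i> * complex_of_real (\<beta> * sgn \<theta> * tan (pi * \<alpha> / 2)))
             + \<i> * complex_of_real (\<mu> * \<theta>)))"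

text \<open>The truncation \<open>Y_k\<close> and discretisation \<open>Z_k\<close>, as functions of the value.\<close>

definition Ytrunc :: "nat \<Rightarrow> real \<Rightarrow> real" where
  "Ytrunc k x = (if 2 ^ k \<le> x \<and> x \<le> 4 ^ k then x else 0)"

definition Zdisc :: "nat \<Rightarrow> real \<Rightarrow> real" where
  "Zdisc k y = (\<Sum>j\<in>{8 ^ k .. 16 ^ k :: nat}.
      (real j / 4 ^ k) * (if real j / 4 ^ k \<le> y \<and> y < (real j + 1) / 4 ^ k then 1 else 0))"

definition dseq :: "nat \<Rightarrow> nat" where
  "dseq k = 4 ^ (k ^ 2)"

definition adm_index :: "(nat \<times> nat) set" where
  "adm_index = {(k, j). k \<ge> 1 \<and> j < 2 * dseq k}"

definition birkhoff_sum :: "('a \<Rightarrow> 'a) \<Rightarrow> nat \<Rightarrow> ('a \<Rightarrow> real) \<Rightarrow> 'a \<Rightarrow> real" where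
  "birkhoff_sum T n h x = (\<Sum>j<n. h ((T ^^ j) x))"

definition Wproc :: "real \<Rightarrow> ('a \<Rightarrow> 'a) \<Rightarrow> nat \<Rightarrow> ('a \<Rightarrow> real) \<Rightarrow> real \<Rightarrow> 'a \<Rightarrow> real" where
  "Wproc \<alpha> T n h t x = real n powr (- 1 / \<alpha>) * birkhoff_sum T (nat \<lfloor>real n * t\<rfloor>) h x"

definition WL :: "real \<Rightarrow> ('a \<Rightarrow> 'a) \<Rightarrow> (nat \<Rightarrow> 'a \<Rightarrow> real) \<Rightarrow> nat \<Rightarrow> real \<Rightarrow> 'a \<Rightarrow> real" where
  "WL \<alpha> T f n t x = (\<Sum>k. if real k > log 2 (real n) / \<alpha> then Wproc \<alpha> T n (f k) t x else 0)"

definition sup_norm01 :: "(real \<Rightarrow> real) \<Rightarrow> real" where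
  "sup_norm01 w = (SUP t\<in>{0..1}. \<bar>w t\<bar>)"

end

theory Submission imports Defs "HOL-Real_Asymp.Real_Asymp" begin

lemma main_bound:
  assumes RD: "real_distribution M" and "u > 0"
  shows "u * measure M {x. abs x \<ge> 2 / u} \<le> Re (CLBINT t:{-u..u}. 1 - char M t)"
proof -
  interpret Mn: real_distribution M by fact
  have *: "\<And>u x. u > 0 \<Longrightarrow> x \<noteq> 0 \<Longrightarrow> (CLBINT t:{-u..u}. 1 - iexp (t * x)) =
      2 * (u  - sin (u * x) / x)"
  proof -
    fix u :: real and x :: real
    assume "u > 0" and "x \<noteq> 0"
    hence "(CLBINT t:{-u..u}. 1 - iexp (t * x)) = (CLBINT t=-u..u. 1 - iexp (t * x))"
      by (subst interval_integral_Icc, auto)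
    also have "\<dots> = (CLBINT t=-u..ereal 0. 1 - iexp (t * x)) + (CLBINT t= ereal 0..u. 1 - iexp (t * x))"
      using \<open>u > 0\<close>
      by (subst interval_integral_sum; force simp add: interval_integrable_isCont)
    also have "\<dots> = (CLBINT t=ereal 0..u. 1 - iexp (t * -x)) + (CLBINT t=ereal 0..u. 1 - iexp (t * x))"
      by (subst interval_integral_reflect, auto)
    also have "... = CLBINT xa=ereal 0..ereal u. 1 - iexp (xa * - x) + (1 - iexp (xa * x))"
      by (subst interval_lebesgue_integral_add (2) [symmetric]) (auto simp: interval_integrable_isCont)
    also have "\<dots> = (LBINT t=ereal 0..u. 2 - 2 * cos (t * x))"
      unfolding exp_Euler cos_of_real by (simp flip: interval_lebesgue_integral_of_real)
    also have "\<dots> = 2 * u - 2 * sin (u * x) / x"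
      by (subst interval_lebesgue_integral_diff)
         (auto intro!: interval_integrable_isCont
               simp: interval_lebesgue_integral_of_real integral_cos [OF \<open>x \<noteq> 0\<close>] mult.commute[of _ x])
    finally show "(CLBINT t:{-u..u}. 1 - iexp (t * x)) = 2 * (u  - sin (u * x) / x)"
      by (simp add: field_simps)
  qed
    interpret P: pair_sigma_finite "M" lborel ..
    have Mn1 [simp]: "measure (M) UNIV = 1" by (metis Mn.prob_space Mn.space_eq_univ)
    have Mn2 [simp]: "\<And>x. complex_integrable (M) (\<lambda>t. exp (\<i> * complex_of_real (x * t)))"
      by (rule Mn.integrable_const_bound [where B = 1], auto)
    have Mn3: "set_integrable (M \<Otimes>\<^sub>M lborel) (UNIV \<times> {- u..u}) (\<lambda>a. 1 - exp (\<i> * complex_of_real (snd a * fst a)))"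
      using \<open>0 < u\<close>
      unfolding set_integrable_def
      by (intro integrableI_bounded_set_indicator [where B="2"])
         (auto simp: lborel.emeasure_pair_measure_Times ennreal_mult_less_top not_less top_unique
               split: split_indicator
               intro!: order_trans [OF norm_triangle_ineq4])
    have "(CLBINT t:{-u..u}. 1 - char (M) t) =
        (CLBINT t:{-u..u}. (CLINT x | M. 1 - iexp (t * x)))"
      unfolding char_def by (rule set_lebesgue_integral_cong, auto simp del: of_real_mult)
    also have "\<dots> = (CLBINT t. (CLINT x | M. indicator {-u..u} t *\<^sub>R (1 - iexp (t * x))))"
      unfolding set_lebesgue_integral_def
      by (rule Bochner_Integration.integral_cong) (auto split: split_indicator)
    also have "\<dots> = (CLINT x | M. (CLBINT t:{-u..u}. 1 - iexp (t * x)))"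
      using Mn3 by (subst P.Fubini_integral) (auto simp: indicator_times split_beta' set_integrable_def set_lebesgue_integral_def)
    also have "\<dots> = (CLINT x | M. (if x = 0 then 0 else 2 * (u  - sin (u * x) / x)))"
      using \<open>u > 0\<close> by (intro Bochner_Integration.integral_cong, auto simp add: * simp del: of_real_mult)
    also have "\<dots> = (LINT x | M. (if x = 0 then 0 else 2 * (u  - sin (u * x) / x)))"
      by (rule integral_complex_of_real)
    finally have "Re (CLBINT t:{-u..u}. 1 - char (M) t) =
       (LINT x | M. (if x = 0 then 0 else 2 * (u  - sin (u * x) / x)))" by simp
    also have "\<dots> \<ge> (LINT x : {x. abs x \<ge> 2 / u} | M. u)"
    proof -
      have "complex_integrable (M) (\<lambda>x. CLBINT t:{-u..u}. 1 - iexp (snd (x, t) * fst (x, t)))"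
        using Mn3 unfolding set_integrable_def set_lebesgue_integral_def
        by (intro P.integrable_fst) (simp add: indicator_times split_beta')
      hence "complex_integrable (M) (\<lambda>x. if x = 0 then 0 else 2 * (u  - sin (u * x) / x))"
        using \<open>u > 0\<close>
        unfolding set_integrable_def
        by (subst Bochner_Integration.integrable_cong) (auto simp add: * simp del: of_real_mult)
      hence **: "integrable (M) (\<lambda>x. if x = 0 then 0 else 2 * (u  - sin (u * x) / x))"
        unfolding complex_of_real_integrable_eq .
      have "2 * sin x \<le> x" if "2 \<le> x" for x :: real
        by (rule order_trans[OF _ \<open>2 \<le> x\<close>]) auto
      moreover have "x \<le> 2 * sin x" if "x \<le> - 2" for x :: real
        by (rule order_trans[OF \<open>x \<le> - 2\<close>]) auto
      moreover have "x < 0 \<Longrightarrow> x \<le> sin x" for x :: real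
        using sin_x_le_x[of "-x"] by simp
      ultimately show ?thesis
        using \<open>u > 0\<close> unfolding set_lebesgue_integral_def
        by (intro integral_mono [OF _ **])
           (auto simp: divide_simps sin_x_le_x mult.commute[of u] mult_neg_pos top_unique less_top[symmetric]
                 split: split_indicator)
    qed
    also (xtrans) have "(LINT x : {x. abs x \<ge> 2 / u} | M. u) = u * measure (M) {x. abs x \<ge> 2 / u}"
      unfolding set_lebesgue_integral_def
      by (simp add: Mn.emeasure_eq_measure)
    finally show "Re (CLBINT t:{-u..u}. 1 - char (M) t) \<ge> u * measure (M) {x. abs x \<ge> 2 / u}" .
qed

lemma char_tail_bound:
  assumes RD: "real_distribution M" and u: "u > 0"
    and B: "\<And>t. \<bar>t\<bar> \<le> u \<Longrightarrow> cmod (1 - char M t) \<le> B"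
  shows "measure M {x. abs x \<ge> 2 / u} \<le> 2 * B"
proof -
  interpret M': real_distribution M by fact
  have 3: "integrable lborel (\<lambda>x. indicat_real {-u..u} x *\<^sub>R cmod (1 - char M x))"
    by (intro borel_integrable_compact[OF compact_Icc] continuous_at_imp_continuous_on
                continuous_intros ballI M'.isCont_char continuous_intros)
  have "u * measure M {x. abs x \<ge> 2 / u} \<le> Re (CLBINT t:{-u..u}. 1 - char M t)"
    by (rule main_bound[OF RD u])
  also have "\<dots> \<le> cmod (CLBINT t:{-u..u}. 1 - char M t)"
    by (rule complex_Re_le_cmod)
  also have "\<dots> \<le> (LBINT t:{-u..u}. cmod (1 - char M t))"
    unfolding set_lebesgue_integral_def
    using integral_norm_bound[of _ "\<lambda>x. indicator {u..v} x *\<^sub>R (1 - char M x)" for u v] by simp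
  also have "\<dots> \<le> (LBINT t:{-u..u}. B)"
    unfolding set_lebesgue_integral_def
  proof (rule integral_mono [OF 3])
    show "indicat_real {- u..u} x *\<^sub>R cmod (1 - char M x)
         \<le> indicat_real {- u..u} x *\<^sub>R B" if "x \<in> space lborel" for x
      using B[of x] by (auto simp: indicator_def)
  qed (simp add: emeasure_lborel_Icc_eq)
  also have "\<dots> = 2 * u * B"
    using u unfolding set_lebesgue_integral_def by simp
  finally show ?thesis using u by (simp add: mult.assoc)
qed

lemma iexp_minus_one: "cmod (1 - iexp y) \<le> \<bar>y\<bar>"
  using iexp_approx1[of y 0] by (simp add: norm_minus_commute)

lemma exp_bound_aux:
  fixes A y :: real assumes "A \<ge> 0"
  shows "cmod (1 - exp (complex_of_real (- A) + \<i> * complex_of_real y)) \<le> A + \<bar>y\<bar>"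
proof -
  have e: "exp (complex_of_real (- A) + \<i> * complex_of_real y) = complex_of_real (exp (-A)) * iexp y"
    unfolding exp_add by (simp add: exp_of_real[symmetric])
  have "1 - exp (complex_of_real (- A) + \<i> * complex_of_real y)
        = complex_of_real (1 - exp (-A)) + complex_of_real (exp (-A)) * (1 - iexp y)"
    unfolding e by (simp add: algebra_simps)
  also have "cmod \<dots> \<le> cmod (complex_of_real (1 - exp (-A))) + cmod (complex_of_real (exp (-A)) * (1 - iexp y))"
    by (rule norm_triangle_ineq)
  also have "\<dots> \<le> A + \<bar>y\<bar>"
  proof -
    have 1: "\<bar>1 - exp (-A)\<bar> \<le> A" using exp_ge_add_one_self[of "-A"] assms by auto
    have "exp (-A) \<le> 1" using assms by simp
    hence 2: "exp (-A) * cmod (1 - iexp y) \<le> \<bar>y\<bar>"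
      using iexp_minus_one[of y] by (meson exp_ge_zero mult_left_le_one_le norm_ge_zero order_trans)
    have 3: "cmod (complex_of_real (1 - exp (-A))) = \<bar>1 - exp (-A)\<bar>" by (rule norm_of_real)
    have 4: "cmod (complex_of_real (exp (-A)) * (1 - iexp y)) = exp (-A) * cmod (1 - iexp y)"
      by (simp add: norm_mult)
    show ?thesis unfolding 3 4 using 1 2 by linarith
  qed
  finally show ?thesis .
qed

lemma stable_char_bound:
  assumes "has_stable_law P Y \<alpha> s 1 0" "0 < \<alpha>" "s > 0" "\<bar>t\<bar> \<le> u"
  shows "cmod (1 - char (distr P borel Y) t) \<le> s powr \<alpha> * u powr \<alpha> * (1 + \<bar>tan (pi * \<alpha> / 2)\<bar>)"
proof -
  define A where "A = s powr \<alpha> * \<bar>t\<bar> powr \<alpha>"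
  define b where "b = sgn t * tan (pi * \<alpha> / 2)"
  have A0: "A \<ge> 0" unfolding A_def by simp
  have ch: "char (distr P borel Y) t = exp (complex_of_real (- A) + \<i> * complex_of_real (A * b))"
  proof -
    have "char (distr P borel Y) t = exp (- complex_of_real A * (1 - \<i> * complex_of_real (1 * sgn t * tan (pi * \<alpha> / 2)))
             + \<i> * complex_of_real (0 * t))"
      using assms(1) unfolding has_stable_law_def A_def by blast
    also have "\<dots> = exp (complex_of_real (- A) + \<i> * complex_of_real (A * b))"
      unfolding b_def by (simp add: algebra_simps)
    finally show ?thesis .
  qed
  have "cmod (1 - char (distr P borel Y) t) \<le> A + \<bar>A * b\<bar>"
    unfolding ch by (rule exp_bound_aux[OF A0])
  also have "\<dots> \<le> A * (1 + \<bar>tan (pi * \<alpha> / 2)\<bar>)"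
  proof -
    have "\<bar>b\<bar> \<le> \<bar>tan (pi * \<alpha> / 2)\<bar>" unfolding b_def by (auto simp: abs_mult abs_sgn_eq)
    hence "\<bar>A * b\<bar> \<le> A * \<bar>tan (pi * \<alpha> / 2)\<bar>" using A0 by (simp add: abs_mult mult_left_mono)
    thus ?thesis by (simp add: algebra_simps)
  qed
  also have "\<dots> \<le> s powr \<alpha> * u powr \<alpha> * (1 + \<bar>tan (pi * \<alpha> / 2)\<bar>)"
  proof -
    have "\<bar>t\<bar> powr \<alpha> \<le> u powr \<alpha>" using assms by (intro powr_mono2) auto
    hence "A \<le> s powr \<alpha> * u powr \<alpha>" unfolding A_def by (simp add: mult_left_mono)
    thus ?thesis by (intro mult_right_mono) auto
  qed
  finally show ?thesis .
qed

lemma stable_tail: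
  assumes P: "prob_space P" and st: "has_stable_law P Y \<alpha> s 1 0" and "0 < \<alpha>" "s > 0" "u > 0"
  shows "measure P {\<omega>\<in>space P. \<bar>Y \<omega>\<bar> \<ge> 2 / u} \<le> 2 * (s powr \<alpha> * u powr \<alpha> * (1 + \<bar>tan (pi * \<alpha> / 2)\<bar>))"
proof -
  interpret P: prob_space P by fact
  have Ym: "Y \<in> borel_measurable P" using st unfolding has_stable_law_def by blast
  have RD: "real_distribution (distr P borel Y)" using Ym by simp
  have "measure (distr P borel Y) {x. \<bar>x\<bar> \<ge> 2 / u} \<le> 2 * (s powr \<alpha> * u powr \<alpha> * (1 + \<bar>tan (pi * \<alpha> / 2)\<bar>))"
    by (rule char_tail_bound[OF RD \<open>u > 0\<close>]) (rule stable_char_bound[OF st], use assms in auto)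
  moreover have "measure (distr P borel Y) {x. \<bar>x\<bar> \<ge> 2 / u} = measure P {\<omega>\<in>space P. \<bar>Y \<omega>\<bar> \<ge> 2 / u}"
    using Ym by (subst measure_distr) (auto intro: arg_cong[where f="measure P"])
  ultimately show ?thesis by simp
qed

lemma Zdisc_meas[measurable]: "Zdisc k \<in> borel_measurable borel"
  unfolding Zdisc_def by measurable

lemma Ytrunc_meas[measurable]: "Ytrunc k \<in> borel_measurable borel"
  unfolding Ytrunc_def by measurable

lemma Zdisc_zero: "Zdisc k 0 = 0"
proof -
  have "\<And>j. j \<in> {8 ^ k .. 16 ^ k :: nat} \<Longrightarrow> \<not> (real j / 4 ^ k \<le> 0)"
  proof -
    fix j assume "j \<in> {8 ^ k .. 16 ^ k :: nat}"
    moreover have "(1::nat) \<le> 8 ^ k" by simp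
    ultimately have "j \<ge> 1" by (meson atLeastAtMost_iff le_trans)
    thus "\<not> (real j / 4 ^ k \<le> 0)" by (simp add: divide_le_0_iff not_le)
  qed
  thus ?thesis unfolding Zdisc_def by (intro sum.neutral) auto
qed

lemma ZY_nonzero: "Zdisc k (Ytrunc k x) \<noteq> 0 \<Longrightarrow> 2 ^ k \<le> x"
  by (cases "2 ^ k \<le> x \<and> x \<le> 4 ^ k") (auto simp: Ytrunc_def Zdisc_zero)

lemma single_bound:
  fixes m :: "'a measure" and T :: "'a \<Rightarrow> 'a" and \<alpha> :: real
    and f :: "nat \<Rightarrow> 'a \<Rightarrow> real"
    and P :: "'b measure" and X :: "nat \<Rightarrow> nat \<Rightarrow> 'b \<Rightarrow> real"
  assumes mp: "prob_space m"
    and Tm: "T \<in> measurable m m"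
    and a0: "0 < \<alpha>" and a1: "\<alpha> < 1"
    and PP: "prob_space P"
    and st: "\<And>k i. k \<ge> 1 \<Longrightarrow> i \<ge> 1 \<Longrightarrow>
           has_stable_law P (X k i) \<alpha> (real k powr (- 1 / \<alpha>)) 1 0"
    and fm: "\<And>k. k \<ge> 1 \<Longrightarrow> f k \<in> borel_measurable m"
    and eq: "distr m (Pi\<^sub>M adm_index (\<lambda>_. borel))
           (\<lambda>x. \<lambda>(k, j)\<in>adm_index. f k ((T ^^ j) x))
         = distr P (Pi\<^sub>M adm_index (\<lambda>_. borel))
           (\<lambda>\<omega>. \<lambda>(k, j)\<in>adm_index. Zdisc k (Ytrunc k (X k (j + 1) \<omega>)))"
    and k: "k \<ge> 1" and j: "j < 2 * dseq k"
  shows "measure m {x\<in>space m. f k ((T ^^ j) x) \<noteq> 0}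
     \<le> 4 * (1 + \<bar>tan (pi * \<alpha> / 2)\<bar>) / real k * 2 powr (- \<alpha> * real k)"
proof -
  define PM where "PM = (Pi\<^sub>M adm_index (\<lambda>_. borel) :: ((nat \<times> nat) \<Rightarrow> real) measure)"
  define F where "F = (\<lambda>x. \<lambda>(k, j)\<in>adm_index. f k ((T ^^ j) x))"
  define G where "G = (\<lambda>\<omega>. \<lambda>(k, j)\<in>adm_index. Zdisc k (Ytrunc k (X k (j + 1) \<omega>)))"
  have kj: "(k, j) \<in> adm_index" using k j by (simp add: adm_index_def)
  have Fm: "F \<in> measurable m PM"
    unfolding F_def PM_def
  proof (rule measurable_restrict)
    fix i assume "i \<in> adm_index"
    then obtain a b where i: "i = (a, b)" and a: "a \<ge> 1" by (auto simp: adm_index_def)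
    have "(\<lambda>x. f a ((T ^^ b) x)) \<in> borel_measurable m"
      using measurable_compose[OF measurable_compose_n[OF Tm] fm[OF a]] by (simp add: comp_def)
    thus "(\<lambda>x. case i of (k, j) \<Rightarrow> f k ((T ^^ j) x)) \<in> borel_measurable m" by (simp add: i)
  qed
  have Gm: "G \<in> measurable P PM"
    unfolding G_def PM_def
  proof (rule measurable_restrict)
    fix i assume "i \<in> adm_index"
    then obtain a b where i: "i = (a, b)" and a: "a \<ge> 1" by (auto simp: adm_index_def)
    have Xm: "X a (b + 1) \<in> borel_measurable P"
      using st[OF a, of "b+1"] unfolding has_stable_law_def by simp
    have "(\<lambda>\<omega>. Zdisc a (Ytrunc a (X a (b + 1) \<omega>))) \<in> borel_measurable P"
      using Xm by measurable
    thus "(\<lambda>\<omega>. case i of (k, j) \<Rightarrow> Zdisc k (Ytrunc k (X k (j + 1) \<omega>))) \<in> borel_measurable P" by (simp add: i)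
  qed
  define S where "S = {g\<in>space PM. g (k, j) \<noteq> 0}"
  have Ss: "S \<in> sets PM"
    unfolding S_def PM_def using kj by measurable
  have "measure m {x\<in>space m. f k ((T ^^ j) x) \<noteq> 0} = measure m (F -` S \<inter> space m)"
    using measurable_space[OF Fm] kj
    by (intro arg_cong[where f="measure m"]) (auto simp: S_def F_def)
  also have "\<dots> = measure (distr m PM F) S" using Fm Ss by (simp add: measure_distr)
  also have "\<dots> = measure (distr P PM G) S" using eq unfolding PM_def F_def G_def by simp
  also have "\<dots> = measure P (G -` S \<inter> space P)" using Gm Ss by (simp add: measure_distr)
  also have "\<dots> \<le> measure P {\<omega>\<in>space P. \<bar>X k (j + 1) \<omega>\<bar> \<ge> 2 / (2 / 2 ^ k)}"
  proof -
    interpret P: prob_space P by fact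
    have Xm: "X k (j + 1) \<in> borel_measurable P"
      using st[OF k, of "j+1"] unfolding has_stable_law_def by simp
    show ?thesis
    proof (rule P.finite_measure_mono)
      show "G -` S \<inter> space P \<subseteq> {\<omega>\<in>space P. \<bar>X k (j + 1) \<omega>\<bar> \<ge> 2 / (2 / 2 ^ k)}"
        using kj by (auto simp: S_def G_def dest!: ZY_nonzero)
      show "{\<omega>\<in>space P. \<bar>X k (j + 1) \<omega>\<bar> \<ge> 2 / (2 / 2 ^ k)} \<in> sets P"
        using Xm by measurable
    qed
  qed
  also have "\<dots> \<le> 2 * ((real k powr (- 1 / \<alpha>)) powr \<alpha> * (2 / 2 ^ k) powr \<alpha> * (1 + \<bar>tan (pi * \<alpha> / 2)\<bar>))"
    by (rule stable_tail[OF PP st[OF k]]) (use k a0 in auto)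
  also have "\<dots> \<le> 4 * (1 + \<bar>tan (pi * \<alpha> / 2)\<bar>) / real k * 2 powr (- \<alpha> * real k)"
  proof -
    have 1: "(real k powr (- 1 / \<alpha>)) powr \<alpha> = 1 / real k"
    proof -
      have "(real k powr (- 1 / \<alpha>)) powr \<alpha> = real k powr (- 1 / \<alpha> * \<alpha>)" by (simp add: powr_powr)
      also have "- 1 / \<alpha> * \<alpha> = - 1" using a0 by simp
      also have "real k powr (- 1) = 1 / real k" using k by (simp add: powr_minus divide_inverse)
      finally show ?thesis .
    qed
    have 2: "(2 / 2 ^ k :: real) powr \<alpha> = 2 powr \<alpha> * 2 powr (- \<alpha> * real k)"
    proof -
      have "(2 / 2 ^ k :: real) = 2 powr (1 - real k)"
        by (simp add: powr_diff powr_realpow)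
      hence "(2 / 2 ^ k :: real) powr \<alpha> = 2 powr ((1 - real k) * \<alpha>)" by (simp add: powr_powr)
      also have "\<dots> = 2 powr \<alpha> * 2 powr (- \<alpha> * real k)"
        by (simp add: powr_add[symmetric] algebra_simps)
      finally show ?thesis .
    qed
    have 3: "(2::real) powr \<alpha> \<le> 2" using powr_mono[of \<alpha> 1 "2::real"] a1 by simp
    have C: "0 \<le> 1 + \<bar>tan (pi * \<alpha> / 2)\<bar>" by simp
    have r: "0 \<le> (2::real) powr (- \<alpha> * real k)" by simp
    have "2 * (1 / real k * (2 powr \<alpha> * 2 powr (- \<alpha> * real k)) * (1 + \<bar>tan (pi * \<alpha> / 2)\<bar>))
       = (2 powr \<alpha>) * (2 * (1 + \<bar>tan (pi * \<alpha> / 2)\<bar>) / real k * 2 powr (- \<alpha> * real k))"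
      by (simp add: field_simps)
    also have "\<dots> \<le> 2 * (2 * (1 + \<bar>tan (pi * \<alpha> / 2)\<bar>) / real k * 2 powr (- \<alpha> * real k))"
      using 3 C r by (intro mult_right_mono) auto
    also have "\<dots> = 4 * (1 + \<bar>tan (pi * \<alpha> / 2)\<bar>) / real k * 2 powr (- \<alpha> * real k)" by simp
    finally show ?thesis unfolding 1 2 .
  qed
  finally show ?thesis .
qed

lemma geom_tail:
  fixes \<alpha> L :: real
  assumes a0: "0 < \<alpha>" and L: "0 \<le> L"
  defines "g \<equiv> (\<lambda>k::nat. if real k > L then 2 powr (- \<alpha> * real k) else 0)"
  shows "summable g" "suminf g \<le> 2 powr (- \<alpha> * L) / (1 - 2 powr (- \<alpha>))"
proof -
  define r :: real where "r = 2 powr (- \<alpha>)"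
  have r0: "0 < r" by (simp add: r_def)
  have r1: "r < 1" unfolding r_def using powr_less_mono[of "- \<alpha>" 0 "2::real"] a0 by simp
  have rk: "2 powr (- \<alpha> * real k) = r ^ k" for k
  proof -
    have "r ^ k = r powr real k" using r0 by (simp add: powr_realpow)
    also have "\<dots> = 2 powr (- \<alpha> * real k)" unfolding r_def by (simp add: powr_powr)
    finally show ?thesis by simp
  qed
  define k1 where "k1 = nat \<lfloor>L\<rfloor> + 1"
  have k1iff: "real k > L \<longleftrightarrow> k \<ge> k1" for k
    unfolding k1_def using L by linarith
  have gk: "g k = (if k \<ge> k1 then r ^ k else 0)" for k
    unfolding g_def rk k1iff ..
  have "(\<lambda>i. r ^ k1 * r ^ i) sums (r ^ k1 * (1 / (1 - r)))"
    by (rule sums_mult, rule geometric_sums) (use r0 r1 in auto)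
  hence "(\<lambda>i. g (i + k1)) sums (r ^ k1 / (1 - r))"
    by (simp add: gk power_add mult.commute)
  hence gs: "g sums (r ^ k1 / (1 - r) + (\<Sum>i<k1. g i))" by (simp add: sums_iff_shift)
  have "(\<Sum>i<k1. g i) = 0" by (simp add: gk)
  with gs have gs': "g sums (r ^ k1 / (1 - r))" by simp
  thus "summable g" by (rule sums_summable)
  have "r ^ k1 = 2 powr (- \<alpha> * real k1)" by (rule rk[symmetric])
  also have "\<dots> \<le> 2 powr (- \<alpha> * L)"
    using k1iff[of k1] a0 by (intro powr_mono) auto
  finally have "r ^ k1 / (1 - r) \<le> 2 powr (- \<alpha> * L) / (1 - r)"
    using r1 by (intro divide_right_mono) auto
  thus "suminf g \<le> 2 powr (- \<alpha> * L) / (1 - 2 powr (- \<alpha>))"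
    using sums_unique[OF gs'] by (simp add: r_def)
qed

lemma WL_zero:
  assumes H: "\<And>k j. real k > log 2 (real n) / \<alpha> \<Longrightarrow> j < n \<Longrightarrow> f k ((T ^^ j) x) = 0"
  shows "sup_norm01 (\<lambda>t. WL \<alpha> T f n t x) = 0"
proof -
  have W0: "WL \<alpha> T f n t x = 0" if t: "t \<in> {0..1}" for t
  proof -
    have le: "nat \<lfloor>real n * t\<rfloor> \<le> n"
    proof -
      have "real n * t \<le> real n" using t by (simp add: mult_left_le)
      hence "\<lfloor>real n * t\<rfloor> \<le> int n" by linarith
      thus ?thesis by linarith
    qed
    have "\<And>k. (if real k > log 2 (real n) / \<alpha> then Wproc \<alpha> T n (f k) t x else 0) = 0"
    proof -
      fix k
      show "(if real k > log 2 (real n) / \<alpha> then Wproc \<alpha> T n (f k) t x else 0) = 0"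
      proof (cases "real k > log 2 (real n) / \<alpha>")
        case True
        have "birkhoff_sum T (nat \<lfloor>real n * t\<rfloor>) (f k) x = 0"
          unfolding birkhoff_sum_def using le by (intro sum.neutral) (auto intro!: H True)
        thus ?thesis using True by (simp add: Wproc_def)
      qed simp
    qed
    thus ?thesis unfolding WL_def by simp
  qed
  have "sup_norm01 (\<lambda>t. WL \<alpha> T f n t x) = (SUP t\<in>{0..1::real}. (0::real))"
    unfolding sup_norm01_def using W0 by (intro SUP_cong) auto
  also have "\<dots> = 0" by simp
  finally show ?thesis .
qed

lemma log_facts:
  fixes \<alpha> :: real and n k :: nat
  assumes a0: "0 < \<alpha>" and a1: "\<alpha> < 1" and n: "n \<ge> 2" and k: "real k > log 2 (real n) / \<alpha>"
  shows "k \<ge> 1" "n < 2 * dseq k"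
proof -
  have lp: "log 2 (real n) > 0" using n by simp
  have "log 2 (real n) / \<alpha> \<ge> log 2 (real n)" using lp a0 a1 by (simp add: le_divide_eq)
  hence kl: "log 2 (real n) < real k" using k by linarith
  thus "k \<ge> 1" using lp by (cases k) auto
  have "real n < 2 powr real k" using kl n by (subst (asm) log_less_iff) auto
  hence "real n < real (2 ^ k)" by (simp add: powr_realpow)
  hence "n < 2 ^ k" by linarith
  also have "(2::nat) ^ k \<le> 2 ^ (2 * k ^ 2)" by (intro power_increasing) (auto simp: power2_eq_square)
  also have "\<dots> = dseq k" by (simp add: dseq_def power_mult)
  finally show "n < 2 * dseq k" by simp
qed

theorem lemma3p1:
  fixes m :: "'a measure" and T :: "'a \<Rightarrow> 'a" and \<alpha> :: real
    and f :: "nat \<Rightarrow> 'a \<Rightarrow> real"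
    and P :: "'b measure" and X :: "nat \<Rightarrow> nat \<Rightarrow> 'b \<Rightarrow> real"
  assumes "prob_space m"
    and "measure_preserving_sys m T"
    and "ergodic_sys m T"
    and "aperiodic_sys m T"
    and "0 < \<alpha>" and "\<alpha> < 1"
    and "prob_space P"
    and "prob_space.indep_vars P (\<lambda>_. borel) (\<lambda>(k, i). X k i) {(k, i). k \<ge> 1 \<and> i \<ge> 1}"
    and "\<And>k i. k \<ge> 1 \<Longrightarrow> i \<ge> 1 \<Longrightarrow>
           has_stable_law P (X k i) \<alpha> (real k powr (- 1 / \<alpha>)) 1 0"
    and "\<And>k. k \<ge> 1 \<Longrightarrow> f k \<in> borel_measurable m"
    and "distr m (Pi\<^sub>M adm_index (\<lambda>_. borel))
           (\<lambda>x. \<lambda>(k, j)\<in>adm_index. f k ((T ^^ j) x))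
         = distr P (Pi\<^sub>M adm_index (\<lambda>_. borel))
           (\<lambda>\<omega>. \<lambda>(k, j)\<in>adm_index. Zdisc k (Ytrunc k (X k (j + 1) \<omega>)))"
  shows "(\<lambda>n. measure m {x \<in> space m. sup_norm01 (\<lambda>t. WL \<alpha> T f n t x) \<noteq> 0})
           \<longlonglongrightarrow> 0"
proof -
  note mpA = assms(1) and a0 = assms(5) and a1 = assms(6) and PP = assms(7)
    and st = assms(9) and fm = assms(10) and eq = assms(11)
  interpret mp: prob_space m by fact
  have Tm: "T \<in> measurable m m" using assms(2) unfolding measure_preserving_sys_def by blast
  define C4 where "C4 = 4 * (1 + \<bar>tan (pi * \<alpha> / 2)\<bar>)"
  have C4: "C4 \<ge> 0" unfolding C4_def by simp
  define r where "r = (2::real) powr (- \<alpha>)"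
  have r1: "r < 1" unfolding r_def using powr_less_mono[of "- \<alpha>" 0 "2::real"] a0 by simp
  define Bd where "Bd n = C4 * \<alpha> / (1 - r) * inverse (log 2 (real n))" for n :: nat
  define E where "E n = {x \<in> space m. sup_norm01 (\<lambda>t. WL \<alpha> T f n t x) \<noteq> 0}" for n
  have key: "measure m (E n) \<le> Bd n" if n: "n \<ge> 2" for n
  proof -
    define L where "L = log 2 (real n) / \<alpha>"
    have lp: "log 2 (real n) > 0" using n by simp
    have L0: "L > 0" unfolding L_def using lp a0 by simp
    define I where "I = {(k, j). real k > L \<and> j < n}"
    define A where "A = (\<lambda>(k, j). {x\<in>space m. f k ((T ^^ j) x) \<noteq> 0})"
    define g where "g = (\<lambda>k::nat. if real k > L then 2 powr (- \<alpha> * real k) else 0)"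
    have gsum: "summable g" and gle: "suminf g \<le> 2 powr (- \<alpha> * L) / (1 - 2 powr (- \<alpha>))"
      using geom_tail[OF a0, of L] L0 unfolding g_def by auto
    have g0: "g k \<ge> 0" for k unfolding g_def by simp
    have Ik: "k \<ge> 1" "j < 2 * dseq k" if "(k, j) \<in> I" for k j
      using log_facts[OF a0 a1 n, of k] that unfolding I_def L_def by auto
    have Asets: "A i \<in> sets m" if "i \<in> I" for i
    proof -
      obtain k j where i: "i = (k, j)" by (cases i)
      have "(\<lambda>x. f k ((T ^^ j) x)) \<in> borel_measurable m"
        using measurable_compose[OF measurable_compose_n[OF Tm] fm[OF Ik(1)]] that i by (simp add: comp_def)
      hence "{x\<in>space m. f k ((T ^^ j) x) \<noteq> 0} \<in> sets m" by measurable
      thus ?thesis by (simp add: A_def i)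
    qed
    have Abd: "measure m (A i) \<le> C4 / L * g (fst i)" if "i \<in> I" for i
    proof -
      obtain k j where i: "i = (k, j)" by (cases i)
      have kL: "real k > L" using that i unfolding I_def by simp
      have "measure m (A i) \<le> C4 / real k * 2 powr (- \<alpha> * real k)"
        unfolding A_def i C4_def using single_bound[OF mpA Tm a0 a1 PP st fm eq, of k j] Ik[of k j] that i
        by simp
      also have "\<dots> \<le> C4 / L * 2 powr (- \<alpha> * real k)"
        using kL L0 C4 by (intro mult_right_mono divide_left_mono) auto
      finally show ?thesis using kL by (simp add: g_def i)
    qed
    define B where "B = real n * (C4 / L) * (2 powr (- \<alpha> * L) / (1 - r))"
    have UB: "measure m (\<Union>i\<in>I. A i) \<le> B" and Uf: "(\<Union>i\<in>I. A i) \<in> fmeasurable m"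
    proof -
      have cI: "countable I" by simp
      have fI: "A i \<in> fmeasurable m" if "i \<in> I" for i
        using Asets[OF that] by (simp add: mp.fmeasurable_eq_sets)
      have bd: "measure m (\<Union>i\<in>I'. A i) \<le> B" if I': "I' \<subseteq> I" "finite I'" for I'
      proof -
        have "measure m (\<Union>i\<in>I'. A i) \<le> (\<Sum>i\<in>I'. measure m (A i))"
          using I' Asets by (intro measure_UNION_le) auto
        also have "\<dots> \<le> (\<Sum>i\<in>I'. C4 / L * g (fst i))"
          using I' Abd by (intro sum_mono) auto
        also have "\<dots> \<le> (\<Sum>i\<in>fst ` I' \<times> {..<n}. C4 / L * g (fst i))"
        proof (rule sum_mono2)
          show "finite (fst ` I' \<times> {..<n})" using I' by simp
          show "I' \<subseteq> fst ` I' \<times> {..<n}" using I' unfolding I_def by force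
          show "\<And>b. b \<in> fst ` I' \<times> {..<n} - I' \<Longrightarrow> 0 \<le> C4 / L * g (fst b)"
            using C4 L0 g0 by simp
        qed
        also have "\<dots> = real n * (C4 / L) * (\<Sum>k\<in>fst ` I'. g k)"
        proof -
          have "(\<Sum>i\<in>fst ` I' \<times> {..<n}. C4 / L * g (fst i)) = (\<Sum>k\<in>fst ` I'. \<Sum>j\<in>{..<n}. C4 / L * g (fst (k, j)))"
            unfolding sum.cartesian_product by (simp add: split_def)
          also have "\<dots> = (\<Sum>k\<in>fst ` I'. real n * (C4 / L) * g k)" by (simp add: mult.assoc)
          also have "\<dots> = real n * (C4 / L) * (\<Sum>k\<in>fst ` I'. g k)" by (simp add: sum_distrib_left)
          finally show ?thesis .
        qed
        also have "\<dots> \<le> real n * (C4 / L) * suminf g"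
          using gsum I' g0 C4 L0 by (intro mult_left_mono sum_le_suminf) auto
        also have "\<dots> \<le> B"
          unfolding B_def r_def using gle C4 L0 by (intro mult_left_mono) auto
        finally show ?thesis .
      qed
      show "measure m (\<Union>i\<in>I. A i) \<le> B" by (rule measure_UN_bound[OF cI fI bd]) auto
      show "(\<Union>i\<in>I. A i) \<in> fmeasurable m" by (rule fmeasurable_UN_bound[OF cI fI bd]) auto
    qed
    have Esub: "E n \<subseteq> (\<Union>i\<in>I. A i)"
    proof
      fix x assume x: "x \<in> E n"
      show "x \<in> (\<Union>i\<in>I. A i)"
      proof (rule ccontr)
        assume "x \<notin> (\<Union>i\<in>I. A i)"
        hence "\<And>k j. real k > log 2 (real n) / \<alpha> \<Longrightarrow> j < n \<Longrightarrow> f k ((T ^^ j) x) = 0"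
          using x unfolding E_def I_def A_def L_def by auto
        hence "sup_norm01 (\<lambda>t. WL \<alpha> T f n t x) = 0" by (rule WL_zero)
        thus False using x unfolding E_def by simp
      qed
    qed
    have "measure m (E n) \<le> B"
    proof (cases "E n \<in> sets m")
      case True
      hence "measure m (E n) \<le> measure m (\<Union>i\<in>I. A i)"
        using Esub Uf by (intro mp.finite_measure_mono) (auto simp: fmeasurable_def)
      thus ?thesis using UB by simp
    next
      case False
      hence "measure m (E n) = 0" by (simp add: measure_notin_sets)
      moreover have "0 \<le> B" unfolding B_def using C4 L0 r1 by simp
      ultimately show ?thesis by simp
    qed
    also have "B = Bd n"
    proof -
      have "2 powr (- \<alpha> * L) = inverse (real n)"
        unfolding L_def using a0 n by (simp add: powr_minus)
      thus ?thesis unfolding B_def Bd_def L_def using n a0 by (simp add: field_simps)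
    qed
    finally show ?thesis .
  qed
  have Bd0: "Bd \<longlonglongrightarrow> 0"
  proof -
    have "(\<lambda>n::nat. inverse (log 2 (real n))) \<longlonglongrightarrow> 0" by real_asymp
    hence "(\<lambda>n. C4 * \<alpha> / (1 - r) * inverse (log 2 (real n))) \<longlonglongrightarrow> C4 * \<alpha> / (1 - r) * 0"
      by (intro tendsto_mult tendsto_const)
    thus ?thesis unfolding Bd_def by simp
  qed
  have "(\<lambda>n. measure m (E n)) \<longlonglongrightarrow> 0"
  proof (rule tendsto_sandwich[OF _ _ tendsto_const Bd0])
    show "\<forall>\<^sub>F n in sequentially. 0 \<le> measure m (E n)" by simp
    show "\<forall>\<^sub>F n in sequentially. measure m (E n) \<le> Bd n"
      by (rule eventually_mono[OF eventually_ge_at_top[of "2::nat"]]) (rule key)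
  qed
  thus ?thesis unfolding E_def .
qed

end
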